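(* Let $D$ be a principal ideal domain, $n$ a positive integer, $h_1,\ldots,h_n\in D$, and let $A$ be the $n\times n$ lower triangular Toeplitz matrix whose $(i,j)$ entry is $h_{n-i+j}$ for $i\ge j$ and $0$ for $i<j$. For $1\le c\le n$ let $A_c$ be the $(n-c+1)\times c$ submatrix of $A$ formed by columns $1,\ldots,c$ and rows $c,\ldots,n$. Then for $1\le k\le \frac n2$, the $k$-th Smith normal form entry of $A_c$ is the same (up to units) for all $c$ with $k\le c\le \frac n2$.
   Context: For a $p\times q$ matrix $M$ over a PID with $p\ge q$, its Smith normal form entries $d_1\mid d_2\mid\cdots\mid d_q$ are the diagonal entries of $PMQ$ for invertible $P,Q$ making $PMQ$ diagonal with successive divisibility; they are unique up to units, and $d_k$ is the $k$-th entry. *)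

theory Defs
  imports "Jordan_Normal_Form.Matrix"
begin

class pid = idom +
  assumes every_ideal_principal:
    "\<And>I :: 'a set. 0 \<in> I \<Longrightarrow> (\<forall>x\<in>I. \<forall>y\<in>I. x + y \<in> I) \<Longrightarrow> (\<forall>r. \<forall>x\<in>I. r * x \<in> I)
       \<Longrightarrow> \<exists>g. I = {g * r | r. True}"

text \<open>The n x n lower triangular Toeplitz matrix with (i,j) entry h_(n-i+j) for i>=j
  (1-based indices; here 0-based rows/columns i, j < n).\<close>
definition toeplitz_mat :: "nat \<Rightarrow> (nat \<Rightarrow> 'a::zero) \<Rightarrow> 'a mat" where
  "toeplitz_mat n h = mat n n (\<lambda>(i, j). if j \<le> i then h (n - i + j) else 0)"

definition sub_toeplitz :: "nat \<Rightarrow> (nat \<Rightarrow> 'a::zero) \<Rightarrow> nat \<Rightarrow> 'a mat" where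
  "sub_toeplitz n h c = mat (n - c + 1) c (\<lambda>(r, s). toeplitz_mat n h $$ (r + c - 1, s))"

text \<open>d (indexed 0..q-1, so d (k-1) is the k-th entry) is a list of Smith normal form entries
  of the p x q matrix M: there are invertible P, Q with P M Q diagonal with entries
  d 0, ..., d (q-1) and successive divisibility.\<close>
definition is_snf_entries :: "'a::comm_ring_1 mat \<Rightarrow> (nat \<Rightarrow> 'a) \<Rightarrow> bool" where
  "is_snf_entries M d \<longleftrightarrow>
     (\<exists>P Q. P \<in> carrier_mat (dim_row M) (dim_row M) \<and> Q \<in> carrier_mat (dim_col M) (dim_col M) \<and>
        invertible_mat P \<and> invertible_mat Q \<and>
        P * M * Q = mat (dim_row M) (dim_col M) (\<lambda>(i, j). if i = j then d i else 0) \<and>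
        (\<forall>i. i + 1 < dim_col M \<longrightarrow> d i dvd d (i + 1)))"

end

theory Submission
  imports Defs "Jordan_Normal_Form.Determinant"
begin

definition mm :: "(int \<Rightarrow> 'a::comm_ring_1) \<Rightarrow> nat \<Rightarrow> (nat \<Rightarrow> int) \<Rightarrow> (nat \<Rightarrow> int) \<Rightarrow> 'a" where
  "mm x k r s = det (mat k k (\<lambda>(i,j). x (s j - r i)))"

lemma mm_cong: "(\<And>i. i < k \<Longrightarrow> r i = r' i) \<Longrightarrow> (\<And>j. j < k \<Longrightarrow> s j = s' j) \<Longrightarrow> mm x k r s = mm x k r' s'"
  unfolding mm_def by (intro arg_cong[of _ _ det] eq_matI) auto

lemma mm_leib: "mm x k r s = (\<Sum>p\<in>{p. p permutes {0..<k}}. signof p * (\<Prod>i=0..<k. x (s (p i) - r i)))"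
  unfolding mm_def
  by (subst det_def'[of _ k]) (auto intro!: sum.cong prod.cong simp: permutes_def)

definition Fam :: "nat \<Rightarrow> nat \<Rightarrow> nat set set" where
  "Fam k b = {T. T \<subseteq> {..<k} \<and> card T = b}"

lemma finite_Fam: "finite (Fam k b)"
  unfolding Fam_def by (rule finite_subset[of _ "Pow {..<k}"]) auto

lemma estar_perm:
  fixes x :: "int \<Rightarrow> 'a::comm_ring_1" and r s :: "nat \<Rightarrow> int"
  assumes p: "p permutes {0..<k}"
  shows "(\<Sum>U\<in>Fam k b. \<Prod>i=0..<k. x (s (p i) - (r i - (if i \<in> U then 1 else 0))))
   = (\<Sum>T\<in>Fam k b. \<Prod>i=0..<k. x ((s (p i) + (if p i \<in> T then 1 else 0)) - r i))"
proof (rule sum.reindex_bij_witness[where i="\<lambda>T. inv_into UNIV p ` T" and j="\<lambda>U. p ` U"])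
  have inj: "inj p" using p permutes_inj by blast
  have pk: "\<And>i. i < k \<Longrightarrow> p i < k" using p permutes_in_image by fastforce
  have ipk: "\<And>i. i < k \<Longrightarrow> inv_into UNIV p i < k"
    using permutes_inv[OF p] permutes_in_image by fastforce
  fix U assume U: "U \<in> Fam k b"
  show "inv_into UNIV p ` p ` U = U" using inj by (simp add: image_comp)
  show "p ` U \<in> Fam k b" using U pk inj unfolding Fam_def
    by (auto simp: card_image inj_on_subset[OF inj])
  show "(\<Prod>i = 0..<k. x (s (p i) + (if p i \<in> p ` U then 1 else 0) - r i)) =
         (\<Prod>i = 0..<k. x (s (p i) - (r i - (if i \<in> U then 1 else 0))))"
    using inj by (intro prod.cong) (auto simp: inj_image_mem_iff algebra_simps)
next
  have inj: "inj p" using p permutes_inj by blast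
  have bij: "bij p" using p permutes_bij by blast
  have ipk: "\<And>i. i < k \<Longrightarrow> inv_into UNIV p i < k"
    using permutes_inv[OF p] permutes_in_image by fastforce
  have injinv: "inj (inv_into UNIV p)" using bij bij_imp_bij_inv bij_is_inj by blast
  fix T assume T: "T \<in> Fam k b"
  show "p ` inv_into UNIV p ` T = T" by (simp add: image_comp surj_f_inv_f[OF bij_is_surj[OF bij]])
  show "inv_into UNIV p ` T \<in> Fam k b" using T ipk injinv unfolding Fam_def
    by (auto simp: card_image inj_on_subset[OF injinv])
qed

lemma estar:
  "(\<Sum>T\<in>Fam k b. mm x k r (\<lambda>j. s j + (if j \<in> T then 1 else 0)))
   = (\<Sum>U\<in>Fam k b. mm x k (\<lambda>i. r i - (if i \<in> U then 1 else 0)) s)"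
proof -
  have "(\<Sum>T\<in>Fam k b. mm x k r (\<lambda>j. s j + (if j \<in> T then 1 else 0)))
    = (\<Sum>T\<in>Fam k b. \<Sum>p\<in>{p. p permutes {0..<k}}. signof p * (\<Prod>i=0..<k. x ((s (p i) + (if p i \<in> T then 1 else 0)) - r i)))"
    unfolding mm_leib ..
  also have "\<dots> = (\<Sum>p\<in>{p. p permutes {0..<k}}. signof p * (\<Sum>T\<in>Fam k b. \<Prod>i=0..<k. x ((s (p i) + (if p i \<in> T then 1 else 0)) - r i)))"
    by (subst sum.swap) (simp add: sum_distrib_left)
  also have "\<dots> = (\<Sum>p\<in>{p. p permutes {0..<k}}. signof p * (\<Sum>U\<in>Fam k b. \<Prod>i=0..<k. x (s (p i) - (r i - (if i \<in> U then 1 else 0)))))"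
    by (intro sum.cong refl, simp only: mem_Collect_eq estar_perm[symmetric])
  also have "\<dots> = (\<Sum>U\<in>Fam k b. mm x k (\<lambda>i. r i - (if i \<in> U then 1 else 0)) s)"
    unfolding mm_leib by (subst sum.swap) (simp add: sum_distrib_left)
  finally show ?thesis .
qed

definition phi :: "int \<Rightarrow> nat \<Rightarrow> (nat \<Rightarrow> int) \<Rightarrow> int" where
  "phi L k s = (\<Sum>j<k. (s j - L)^2)"

lemma phi_nonneg: "0 \<le> phi L k s" unfolding phi_def by (intro sum_nonneg) auto

lemma sq_dec: "(1::int) \<le> a \<Longrightarrow> (a - 1)^2 < a^2"
  by (simp add: power2_eq_square algebra_simps)

lemma sum_ind_card: fixes k :: nat shows "X \<subseteq> {..<k} \<Longrightarrow> (\<Sum>j<k. if j \<in> X then (c::int) else 0) = int (card X) * c"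
proof -
  assume X: "X \<subseteq> {..<k}"
  have "(\<Sum>j<k. if j \<in> X then c else 0) = sum (\<lambda>_. c) ({..<k} \<inter> X)"
    by (rule sum.inter_restrict[symmetric]) simp
  also have "{..<k} \<inter> X = X" using X by blast
  finally show ?thesis by simp
qed

lemma card_diff_sym:
  assumes "finite A" "finite B" "card A = card B"
  shows "card (A - B) = card (B - A)"
  using assms by (simp add: card_Diff_subset_Int Int_commute)

definition inbox :: "nat \<Rightarrow> (nat \<Rightarrow> int) \<Rightarrow> int \<Rightarrow> int \<Rightarrow> bool" where
  "inbox k r a1 a2 \<longleftrightarrow> (\<forall>i<k. a1 \<le> r i \<and> r i \<le> a2)"

lemma phi_dec_s0:
  assumes "\<And>j. j < k \<Longrightarrow> \<theta> \<le> s j \<Longrightarrow> L + 1 \<le> s j" and "j0 < k" "\<theta> \<le> s j0"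
  shows "phi L k (\<lambda>j. if \<theta> \<le> s j then s j - 1 else s j) < phi L k s"
  unfolding phi_def
proof (rule sum_strict_mono_ex1)
  show "finite {..<k}" by simp
  show "\<forall>j\<in>{..<k}. ((if \<theta> \<le> s j then s j - 1 else s j) - L)^2 \<le> (s j - L)^2"
  proof
    fix j assume "j \<in> {..<k}"
    then show "((if \<theta> \<le> s j then s j - 1 else s j) - L)^2 \<le> (s j - L)^2"
      using assms(1)[of j] sq_dec[of "s j - L"] by (auto simp: algebra_simps)
  qed
  show "\<exists>j\<in>{..<k}. ((if \<theta> \<le> s j then s j - 1 else s j) - L)^2 < (s j - L)^2"
    using assms(1)[of j0] assms(2,3) sq_dec[of "s j0 - L"] by (auto simp: algebra_simps intro!: bexI[of _ j0])
qed

lemma phi_dec_T: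
  fixes s :: "nat \<Rightarrow> int"
  assumes J: "J = {j\<in>{..<k}. \<theta> \<le> s j}"
    and low: "\<And>j. j < k \<Longrightarrow> s j < \<theta> \<Longrightarrow> s j \<le> \<theta> - 2"
    and T: "T \<subseteq> {..<k}" "card T = card J" "T \<noteq> J"
  shows "phi L k (\<lambda>j. (if \<theta> \<le> s j then s j - 1 else s j) + (if j \<in> T then 1 else 0)) < phi L k s"
proof -
  let ?s' = "\<lambda>j. (if \<theta> \<le> s j then s j - 1 else s j) + (if j \<in> T then 1 else 0)"
  let ?A = "1 - 2 * (\<theta> - L)" and ?B = "2 * (\<theta> - 2 - L) + 1"
  let ?G = "\<lambda>j. (if j \<in> J - T then ?A else 0) + (if j \<in> T - J then ?B else 0)"
  have fJ: "finite J" using J by auto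
  have fT: "finite T" using T(1) finite_subset by blast
  have JT: "card (J - T) = card (T - J)" using card_diff_sym[OF fJ fT] T(2) by simp
  have N: "card (J - T) \<ge> 1"
  proof (rule ccontr)
    assume "\<not> card (J - T) \<ge> 1"
    then have "card (J - T) = 0" by simp
    then have "J - T = {}" using fJ by simp
    then have "J \<subseteq> T" by auto
    then have "J = T" using card_subset_eq[OF fT] T(2) by auto
    then show False using T(3) by simp
  qed
  have le: "(?s' j - L)^2 - (s j - L)^2 \<le> ?G j" if j: "j < k" for j
  proof (cases "\<theta> \<le> s j")
    case True
    then have jJ: "j \<in> J" using J j by auto
    show ?thesis
    proof (cases "j \<in> T")
      case True then show ?thesis using jJ \<open>\<theta> \<le> s j\<close> by simp
    next
      case False
      have "(s j - 1 - L)^2 - (s j - L)^2 = 1 - 2 * (s j - L)" by (simp add: power2_eq_square algebra_simps)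
      also have "\<dots> \<le> ?A" using \<open>\<theta> \<le> s j\<close> by simp
      finally show ?thesis using False jJ \<open>\<theta> \<le> s j\<close> by simp
    qed
  next
    case False
    then have jJ: "j \<notin> J" using J by auto
    have sj: "s j \<le> \<theta> - 2" using low[OF j] False by simp
    show ?thesis
    proof (cases "j \<in> T")
      case False then show ?thesis using jJ \<open>\<not> \<theta> \<le> s j\<close> by simp
    next
      case True
      have "(s j + 1 - L)^2 - (s j - L)^2 = 2 * (s j - L) + 1" by (simp add: power2_eq_square algebra_simps)
      also have "\<dots> \<le> ?B" using sj by simp
      finally show ?thesis using True jJ \<open>\<not> \<theta> \<le> s j\<close> by simp
    qed
  qed
  have "phi L k ?s' - phi L k s = (\<Sum>j<k. (?s' j - L)^2 - (s j - L)^2)"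
    unfolding phi_def by (simp add: sum_subtractf)
  also have "\<dots> \<le> (\<Sum>j<k. ?G j)" by (rule sum_mono) (use le in auto)
  also have "\<dots> = int (card (J - T)) * ?A + int (card (T - J)) * ?B"
  proof -
    have h1: "(\<Sum>j<k. if j \<in> J - T then ?A else 0) = int (card (J - T)) * ?A"
      by (rule sum_ind_card) (use J in auto)
    have h2: "(\<Sum>j<k. if j \<in> T - J then ?B else 0) = int (card (T - J)) * ?B"
      by (rule sum_ind_card) (use T(1) in auto)
    show ?thesis unfolding sum.distrib h1 h2 ..
  qed
  also have "\<dots> = - 2 * int (card (J - T))" using JT by (simp add: algebra_simps)
  also have "\<dots> < 0" using N by simp
  finally show ?thesis by simp
qed

lemma col_reduce:
  fixes x :: "int \<Rightarrow> 'a::comm_ring_1" and d :: 'a and lo hi L :: int and k w \<rho> :: nat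
  assumes k1: "1 \<le> k" and kw: "k \<le> w + 1"
  and H: "\<And>r s a1 a2 b1 b2. inbox k r a1 a2 \<Longrightarrow> inbox k s b1 b2 \<Longrightarrow> a2 - a1 \<le> int \<rho> \<Longrightarrow>
            b2 - b1 \<le> int w \<Longrightarrow> lo \<le> b1 - a2 \<Longrightarrow> b2 - a1 \<le> hi \<Longrightarrow> d dvd mm x k r s"
  shows "inbox k r a1 a2 \<Longrightarrow> inbox k s b1 b2 \<Longrightarrow> a2 - a1 \<le> int \<rho> \<Longrightarrow>
         (a2 - a1) + (b2 - b1) \<le> int \<rho> + int w \<Longrightarrow> lo \<le> b1 - a2 \<Longrightarrow> b2 - a1 \<le> hi \<Longrightarrow>
         (\<forall>j<k. L \<le> s j) \<Longrightarrow> d dvd mm x k r s"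
proof (induction "nat (phi L k s)" arbitrary: r s a1 a2 b1 b2 rule: less_induct)
  case less
  note rb = less.prems(1) and sb = less.prems(2) and IH = less.hyps
  define S where "S = s ` {..<k}"
  have fS: "finite S" and neS: "S \<noteq> {}" using k1 unfolding S_def by (auto simp: lessThan_empty_iff)
  define M where "M = Max S"
  define m where "m = Min S"
  have sM: "\<And>j. j < k \<Longrightarrow> s j \<le> M" unfolding M_def S_def using fS S_def by auto
  have sm: "\<And>j. j < k \<Longrightarrow> m \<le> s j" unfolding m_def S_def using fS S_def by auto
  have MS: "M \<in> S" unfolding M_def using fS neS by simp
  have mS: "m \<in> S" unfolding m_def using fS neS by simp
  have Mb2: "M \<le> b2" using MS sb unfolding S_def inbox_def by auto
  have mb1: "b1 \<le> m" using mS sb unfolding S_def inbox_def by auto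
  have Lm: "L \<le> m" using mS less.prems(7) unfolding S_def by auto
  have cardS: "card S \<le> k" unfolding S_def using card_image_le[of "{..<k}" s] by simp
  show ?case
  proof (cases "M - m \<le> int w")
    case True
    show ?thesis
    proof (rule H[of r a1 a2 s m M])
      show "inbox k s m M" unfolding inbox_def using sM sm by auto
    qed (use rb less.prems True mb1 Mb2 in auto)
  next
    case False
    define B where "B = {v\<in>S. {v..M} \<subseteq> S}"
    have fB: "finite B" using fS unfolding B_def by auto
    have MB: "M \<in> B" unfolding B_def using MS by auto
    define \<theta> where "\<theta> = Min B"
    have \<theta>B: "\<theta> \<in> B" unfolding \<theta>_def using fB MB by (intro Min_in) auto
    have P1: "{\<theta>..M} \<subseteq> S" using \<theta>B unfolding B_def by auto
    have \<theta>M: "\<theta> \<le> M" unfolding \<theta>_def using fB MB by simp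
    have P3: "m < \<theta>"
    proof (rule ccontr)
      assume "\<not> m < \<theta>"
      moreover have "m \<le> \<theta>" using \<theta>B sm unfolding B_def S_def by auto
      ultimately have "\<theta> = m" by simp
      then have "{m..M} \<subseteq> S" using P1 by simp
      then have "card {m..M} \<le> card S" using fS card_mono by blast
      moreover have "card {m..M} = nat (M - m + 1)" by simp
      ultimately show False using cardS False kw by linarith
    qed
    have P2: "\<theta> - 1 \<notin> S"
    proof
      assume "\<theta> - 1 \<in> S"
      then have "\<theta> - 1 \<in> B" using P1 unfolding B_def by (auto simp: atLeastAtMost_iff) (smt (verit, best) atLeastAtMost_iff subset_iff)
      then have "Min B \<le> \<theta> - 1" using Min_le[OF fB] by blast
      then have "\<theta> \<le> \<theta> - 1" unfolding \<theta>_def .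
      then show False by simp
    qed
    have low: "\<And>j. j < k \<Longrightarrow> s j < \<theta> \<Longrightarrow> s j \<le> \<theta> - 2"
    proof -
      fix j assume j: "j < k" "s j < \<theta>"
      have "s j \<in> S" using j unfolding S_def by auto
      then have "s j \<noteq> \<theta> - 1" using P2 by auto
      then show "s j \<le> \<theta> - 2" using j by simp
    qed
    define J where "J = {j\<in>{..<k}. \<theta> \<le> s j}"
    define b where "b = card J"
    have JF: "J \<in> Fam k b" unfolding Fam_def J_def b_def by auto
    define s0 where "s0 = (\<lambda>j. if \<theta> \<le> s j then s j - 1 else s j)"
    obtain jM where jM: "jM < k" "s jM = M" using MS unfolding S_def by auto
    have key: "mm x k r s = (\<Sum>U\<in>Fam k b. mm x k (\<lambda>i. r i - (if i \<in> U then 1 else 0)) s0)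
              - (\<Sum>T\<in>Fam k b - {J}. mm x k r (\<lambda>j. s0 j + (if j \<in> T then 1 else 0)))"
    proof -
      have "mm x k r s = mm x k r (\<lambda>j. s0 j + (if j \<in> J then 1 else 0))"
        by (rule mm_cong) (auto simp: s0_def J_def)
      moreover have "(\<Sum>T\<in>Fam k b. mm x k r (\<lambda>j. s0 j + (if j \<in> T then 1 else 0)))
         = mm x k r (\<lambda>j. s0 j + (if j \<in> J then 1 else 0))
           + (\<Sum>T\<in>Fam k b - {J}. mm x k r (\<lambda>j. s0 j + (if j \<in> T then 1 else 0)))"
        using sum.remove[OF finite_Fam JF] by blast
      ultimately show ?thesis using estar[where k=k and b=b and x=x and r=r and s=s0] by (simp add: algebra_simps)
    qed
    have rho: "a2 - a1 < int \<rho>" using less.prems(4) False Mb2 mb1 by linarith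
    have d1: "d dvd mm x k (\<lambda>i. r i - (if i \<in> U then 1 else 0)) s0" if U: "U \<in> Fam k b" for U
    proof (rule IH[of s0 _ "a1 - 1" a2 m "M - 1"])
      show "nat (phi L k s0) < nat (phi L k s)"
      proof -
        have "phi L k s0 < phi L k s" unfolding s0_def
          by (rule phi_dec_s0[of k \<theta> s L jM]) (use jM \<theta>M P3 Lm sm in auto)
        then show ?thesis using phi_nonneg nat_less_eq_zless by blast
      qed
      show "inbox k (\<lambda>i. r i - (if i \<in> U then 1 else 0)) (a1 - 1) a2"
        using rb unfolding inbox_def by force
      show "inbox k s0 m (M - 1)"
        unfolding inbox_def s0_def
      proof (intro allI impI)
        fix i assume i: "i < k"
        show "m \<le> (if \<theta> \<le> s i then s i - 1 else s i) \<and> (if \<theta> \<le> s i then s i - 1 else s i) \<le> M - 1"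
          using sM[OF i] sm[OF i] P3 \<theta>M by auto
      qed
      show "\<forall>j<k. L \<le> s0 j" unfolding s0_def using sm P3 Lm by force
    qed (use rho less.prems mb1 Mb2 in auto)
    have d2: "d dvd mm x k r (\<lambda>j. s0 j + (if j \<in> T then 1 else 0))" if T: "T \<in> Fam k b - {J}" for T
    proof (rule IH[of "\<lambda>j. s0 j + (if j \<in> T then 1 else 0)" r a1 a2 m M])
      show "nat (phi L k (\<lambda>j. s0 j + (if j \<in> T then 1 else 0))) < nat (phi L k s)"
      proof -
        have TT: "T \<subseteq> {..<k}" "card T = card J" "T \<noteq> J" using T unfolding Fam_def b_def by auto
        have "phi L k (\<lambda>j. s0 j + (if j \<in> T then 1 else 0)) < phi L k s"
          unfolding s0_def by (rule phi_dec_T[OF J_def low TT])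
        then show ?thesis using phi_nonneg nat_less_eq_zless by blast
      qed
      show "inbox k (\<lambda>j. s0 j + (if j \<in> T then 1 else 0)) m M"
        unfolding inbox_def s0_def
      proof (intro allI impI)
        fix i assume i: "i < k"
        show "m \<le> (if \<theta> \<le> s i then s i - 1 else s i) + (if i \<in> T then 1 else 0) \<and> (if \<theta> \<le> s i then s i - 1 else s i) + (if i \<in> T then 1 else 0) \<le> M"
          using sM[OF i] sm[OF i] P3 \<theta>M low[OF i] by auto
      qed
      show "\<forall>j<k. L \<le> s0 j + (if j \<in> T then 1 else 0)" unfolding s0_def using sm P3 Lm by force
    qed (use rho less.prems mb1 Mb2 in auto)
    show ?thesis unfolding key
      by (intro dvd_diff dvd_sum) (use d1 d2 in auto)
  qed
qed

lemma col_reduce':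
  fixes x :: "int \<Rightarrow> 'a::comm_ring_1" and d :: 'a and lo hi L :: int and k w \<rho> :: nat
  assumes k1: "1 \<le> k" and kw: "k \<le> w + 1"
  and H: "\<And>r s a1 a2 b1 b2. inbox k r a1 a2 \<Longrightarrow> inbox k s b1 b2 \<Longrightarrow> a2 - a1 \<le> int \<rho> \<Longrightarrow>
            b2 - b1 \<le> int w \<Longrightarrow> lo \<le> b1 - a2 \<Longrightarrow> b2 - a1 \<le> hi \<Longrightarrow> d dvd mm x k r s"
  shows "inbox k r pa pb \<Longrightarrow> inbox k s qa qb \<Longrightarrow> pb - pa \<le> int \<rho> \<Longrightarrow>
         (pb - pa) + (qb - qa) \<le> int \<rho> + int w \<Longrightarrow> lo \<le> qa - pb \<Longrightarrow> qb - pa \<le> hi \<Longrightarrow>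
         (\<forall>j<k. L \<le> s j) \<Longrightarrow> d dvd mm x k r s"
  by (rule col_reduce[OF k1 kw H])

definition minor :: "'a::comm_ring_1 mat \<Rightarrow> nat \<Rightarrow> (nat \<Rightarrow> nat) \<Rightarrow> (nat \<Rightarrow> nat) \<Rightarrow> 'a" where
  "minor M k f g = det (mat k k (\<lambda>(i,j). M $$ (f i, g j)))"

definition divall :: "'a::comm_ring_1 mat \<Rightarrow> nat \<Rightarrow> 'a \<Rightarrow> bool" where
  "divall M k d \<longleftrightarrow> (\<forall>f g. (\<forall>i<k. f i < dim_row M) \<longrightarrow> (\<forall>j<k. g j < dim_col M) \<longrightarrow> d dvd minor M k f g)"

definition xh :: "(nat \<Rightarrow> 'a) \<Rightarrow> int \<Rightarrow> 'a" where "xh h z = h (nat z)"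

lemma mm_shift: "mm x k r s = mm x k (\<lambda>i. r i + u) (\<lambda>j. s j + u)"
  unfolding mm_def by (intro arg_cong[of _ _ det] eq_matI) auto

lemma mm_transpose: "mm x k r s = mm x k (\<lambda>i. - s i) (\<lambda>j. - r j)"
proof -
  have "mm x k r s = det (transpose_mat (mat k k (\<lambda>(i,j). x (s j - r i))))"
    unfolding mm_def by (rule det_transpose[symmetric]) auto
  also have "transpose_mat (mat k k (\<lambda>(i,j). x (s j - r i))) = mat k k (\<lambda>(i,j). x ((- r j) - (- s i)))"
    by (intro eq_matI) auto
  finally show ?thesis unfolding mm_def .
qed

lemma dim_sub[simp]: "dim_row (sub_toeplitz n h c) = n - c + 1" "dim_col (sub_toeplitz n h c) = c"
  unfolding sub_toeplitz_def by auto

lemma sub_minor: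
  fixes h :: "nat \<Rightarrow> 'a::comm_ring_1"
  assumes c: "1 \<le> c" "c \<le> n" and f: "\<forall>i<k. f i < n - c + 1" and g: "\<forall>j<k. g j < c"
  shows "minor (sub_toeplitz n h c) k f g = mm (xh h) k (\<lambda>i. int (f i) + int c - int n - 1) (\<lambda>j. int (g j))"
  unfolding minor_def mm_def
proof (intro arg_cong[of _ _ det] eq_matI)
  fix i j assume i: "i < dim_row (mat k k (\<lambda>(i, j). xh h (int (g j) - (int (f i) + int c - int n - 1))))"
    and j: "j < dim_col (mat k k (\<lambda>(i, j). xh h (int (g j) - (int (f i) + int c - int n - 1))))"
  have i': "i < k" and j': "j < k" using i j by auto
  have fi: "f i < n - c + 1" and gj: "g j < c" using f g i' j' by auto
  have "sub_toeplitz n h c $$ (f i, g j) = toeplitz_mat n h $$ (f i + c - 1, g j)"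
    unfolding sub_toeplitz_def using fi gj by simp
  also have "\<dots> = h (n - (f i + c - 1) + g j)"
    unfolding toeplitz_mat_def using fi gj c by auto
  also have "n - (f i + c - 1) + g j = nat (int (g j) - (int (f i) + int c - int n - 1))"
    using fi gj c by linarith
  finally show "mat k k (\<lambda>(i, j). sub_toeplitz n h c $$ (f i, g j)) $$ (i, j) =
         mat k k (\<lambda>(i, j). xh h (int (g j) - (int (f i) + int c - int n - 1))) $$ (i, j)"
    using i' j' unfolding xh_def by simp
qed auto

lemma embed:
  fixes h :: "nat \<Rightarrow> 'a::comm_ring_1"
  assumes c: "1 \<le> c" "c \<le> n" and rb: "inbox k r a1 a2" and sb: "inbox k s b1 b2"
    and w1: "a2 - a1 \<le> int n - int c" and w2: "b2 - b1 \<le> int c - 1"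
    and e1: "1 \<le> b1 - a2" and e2: "b2 - a1 \<le> int n"
  shows "\<exists>f g. (\<forall>i<k. f i < n - c + 1) \<and> (\<forall>j<k. g j < c) \<and> mm (xh h) k r s = minor (sub_toeplitz n h c) k f g"
proof -
  define e where "e = max (b2 - int c + 1) (a2 + 1)"
  define g where "g = (\<lambda>j. nat (s j - e))"
  define f where "f = (\<lambda>i. nat (r i - e + int n - int c + 1))"
  have gk: "\<forall>j<k. g j < c" and gv: "\<forall>j<k. int (g j) = s j - e"
    using sb w2 e1 unfolding g_def e_def inbox_def by auto
  have fk: "\<forall>i<k. f i < n - c + 1" and fv: "\<forall>i<k. int (f i) = r i - e + int n - int c + 1"
    using rb w1 e2 c unfolding f_def e_def inbox_def by auto
  have "mm (xh h) k r s = mm (xh h) k (\<lambda>i. r i + (- e)) (\<lambda>j. s j + (- e))" by (rule mm_shift)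
  also have "\<dots> = mm (xh h) k (\<lambda>i. int (f i) + int c - int n - 1) (\<lambda>j. int (g j))"
    by (rule mm_cong) (use fv gv in auto)
  also have "\<dots> = minor (sub_toeplitz n h c) k f g" using sub_minor[OF c fk gk, where h=h] by simp
  finally show ?thesis using fk gk by blast
qed

lemma toep_div:
  fixes h :: "nat \<Rightarrow> 'a::comm_ring_1"
  assumes k: "1 \<le> k" "k \<le> c" and cn: "2 * c \<le> n"
  shows "divall (sub_toeplitz n h c) k d \<longleftrightarrow> divall (sub_toeplitz n h k) k d"
proof
  have c1: "1 \<le> c" "c \<le> n" and k1: "1 \<le> k" "k \<le> n" using k cn by auto
  assume A: "divall (sub_toeplitz n h c) k d"
  show "divall (sub_toeplitz n h k) k d" unfolding divall_def
  proof (intro allI impI)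
    fix f g assume f: "\<forall>i<k. f i < dim_row (sub_toeplitz n h k)" and g: "\<forall>j<k. g j < dim_col (sub_toeplitz n h k)"
    define r where "r = (\<lambda>i. int (f i) + int k - int n - 1)"
    define s where "s = (\<lambda>j. int (g j))"
    have "minor (sub_toeplitz n h k) k f g = mm (xh h) k r s"
      unfolding r_def s_def by (rule sub_minor) (use f g k1 in auto)
    also have "\<dots> = mm (xh h) k (\<lambda>i. - s i) (\<lambda>j. - r j)" by (rule mm_transpose)
    finally have eq: "minor (sub_toeplitz n h k) k f g = mm (xh h) k (\<lambda>i. - s i) (\<lambda>j. - r j)" .
    have "d dvd mm (xh h) k (\<lambda>i. - s i) (\<lambda>j. - r j)"
    proof (rule col_reduce'[where w="n - c" and \<rho>="c - 1" and lo=1 and hi="int n" and L=1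
          and pa="1 - int k" and pb=0 and qa=1 and qb="int n - int k + 1"])
      show "1 \<le> k" using k by simp
      show "k \<le> n - c + 1" using k cn by simp
      show "inbox k (\<lambda>i. - s i) (1 - int k) 0" using g unfolding inbox_def s_def by force
      show "inbox k (\<lambda>j. - r j) 1 (int n - int k + 1)" using f k1 unfolding inbox_def r_def by force
      show "\<forall>j<k. 1 \<le> - r j" using f k1 unfolding r_def by force
      fix r' s' a1 a2 b1 b2
      assume rb: "inbox k r' a1 a2" and sb: "inbox k s' b1 b2" and w1: "a2 - a1 \<le> int (c - 1)"
        and w2: "b2 - b1 \<le> int (n - c)" and e1: "1 \<le> b1 - a2" and e2: "b2 - a1 \<le> int n"
      have "mm (xh h) k r' s' = mm (xh h) k (\<lambda>i. - s' i) (\<lambda>j. - r' j)" by (rule mm_transpose)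
      moreover obtain f' g' where "\<forall>i<k. f' i < n - c + 1" "\<forall>j<k. g' j < c"
        "mm (xh h) k (\<lambda>i. - s' i) (\<lambda>j. - r' j) = minor (sub_toeplitz n h c) k f' g'"
        using embed[OF c1, of k "\<lambda>i. - s' i" "- b2" "- b1" "\<lambda>j. - r' j" "- a2" "- a1" h]
          rb sb w1 w2 e1 e2 c1 cn unfolding inbox_def by fastforce
      ultimately show "d dvd mm (xh h) k r' s'" using A unfolding divall_def by simp
    qed (use k cn in auto)
    then show "d dvd minor (sub_toeplitz n h k) k f g" using eq by simp
  qed
next
  have c1: "1 \<le> c" "c \<le> n" and k1: "1 \<le> k" "k \<le> n" using k cn by auto
  assume A: "divall (sub_toeplitz n h k) k d"
  show "divall (sub_toeplitz n h c) k d" unfolding divall_def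
  proof (intro allI impI)
    fix f g assume f: "\<forall>i<k. f i < dim_row (sub_toeplitz n h c)" and g: "\<forall>j<k. g j < dim_col (sub_toeplitz n h c)"
    define r where "r = (\<lambda>i. int (f i) + int c - int n - 1)"
    define s where "s = (\<lambda>j. int (g j))"
    have eq: "minor (sub_toeplitz n h c) k f g = mm (xh h) k r s"
      unfolding r_def s_def by (rule sub_minor) (use f g c1 in auto)
    have "d dvd mm (xh h) k r s"
    proof (rule col_reduce'[where w="k - 1" and \<rho>="n - k" and lo=1 and hi="int n" and L=0
          and pa="int c - int n - 1" and pb="-1" and qa=0 and qb="int c - 1"])
      show "1 \<le> k" using k by simp
      show "k \<le> k - 1 + 1" by simp
      show "inbox k r (int c - int n - 1) (- 1)" using f c1 unfolding inbox_def r_def by force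
      show "inbox k s 0 (int c - 1)" using g unfolding inbox_def s_def by force
      show "\<forall>j<k. 0 \<le> s j" unfolding s_def by simp
      fix r' s' a1 a2 b1 b2
      assume rb: "inbox k r' a1 a2" and sb: "inbox k s' b1 b2" and w1: "a2 - a1 \<le> int (n - k)"
        and w2: "b2 - b1 \<le> int (k - 1)" and e1: "1 \<le> b1 - a2" and e2: "b2 - a1 \<le> int n"
      obtain f' g' where "\<forall>i<k. f' i < n - k + 1" "\<forall>j<k. g' j < k"
        "mm (xh h) k r' s' = minor (sub_toeplitz n h k) k f' g'"
        using embed[OF k1 rb sb, of h] w1 w2 e1 e2 k1 by fastforce
      then show "d dvd mm (xh h) k r' s'" using A unfolding divall_def by simp
    qed (use k cn in auto)
    then show "d dvd minor (sub_toeplitz n h c) k f g" using eq by simp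
  qed
qed

lemma minor_mult_left:
  fixes A B :: "'a::comm_ring_1 mat"
  assumes A: "A \<in> carrier_mat nr n" and B: "B \<in> carrier_mat n nc" and dB: "divall B k x"
  shows "divall (A * B) k x"
  unfolding divall_def
proof (intro allI impI)
  fix f g assume f: "\<forall>i<k. f i < dim_row (A * B)" and g: "\<forall>j<k. g j < dim_col (A * B)"
  have f': "\<forall>i<k. f i < nr" and g': "\<forall>j<k. g j < nc" using f g A B by auto
  let ?a = "\<lambda>i l. A $$ (f i, l) \<cdot>\<^sub>v vec k (\<lambda>j. B $$ (l, g j))"
  have eqm: "mat k k (\<lambda>(i,j). (A * B) $$ (f i, g j)) = mat\<^sub>r k k (\<lambda>i. finsum_vec TYPE('a) k (?a i) {0..<n})"
  proof (rule eq_matI)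
    fix i j assume i: "i < dim_row (mat\<^sub>r k k (\<lambda>i. finsum_vec TYPE('a) k (?a i) {0..<n}))"
      and j: "j < dim_col (mat\<^sub>r k k (\<lambda>i. finsum_vec TYPE('a) k (?a i) {0..<n}))"
    have i': "i < k" and j': "j < k" using i j by auto
    have "(A * B) $$ (f i, g j) = (\<Sum>l = 0..<n. A $$ (f i, l) * B $$ (l, g j))"
      using A B f' g' i' j' by (simp add: scalar_prod_def)
    also have "\<dots> = finsum_vec TYPE('a) k (?a i) {0..<n} $ j"
      by (subst index_finsum_vec) (use j' in auto)
    finally show "mat k k (\<lambda>(i,j). (A * B) $$ (f i, g j)) $$ (i, j) = mat\<^sub>r k k (\<lambda>i. finsum_vec TYPE('a) k (?a i) {0..<n}) $$ (i, j)"
      using i' j' by simp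
  qed auto
  let ?F = "{\<phi>. (\<forall>i\<in>{0..<k}. \<phi> i \<in> {0..<n}) \<and> (\<forall>i. i \<notin> {0..<k} \<longrightarrow> \<phi> i = i)}"
  have "minor (A * B) k f g = (\<Sum>\<phi>\<in>?F. det (mat\<^sub>r k k (\<lambda>i. ?a i (\<phi> i))))"
    unfolding minor_def eqm by (rule det_linear_rows_sum) auto
  also have "\<dots> = (\<Sum>\<phi>\<in>?F. prod (\<lambda>i. A $$ (f i, \<phi> i)) {0..<k} * minor B k \<phi> g)"
  proof (rule sum.cong[OF refl])
    fix \<phi> assume "\<phi> \<in> ?F"
    have "det (mat\<^sub>r k k (\<lambda>i. ?a i (\<phi> i))) = prod (\<lambda>i. A $$ (f i, \<phi> i)) {0..<k} * det (mat\<^sub>r k k (\<lambda>i. vec k (\<lambda>j. B $$ (\<phi> i, g j))))"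
      by (rule det_rows_mul) auto
    also have "mat\<^sub>r k k (\<lambda>i. vec k (\<lambda>j. B $$ (\<phi> i, g j))) = mat k k (\<lambda>(i,j). B $$ (\<phi> i, g j))"
      by (rule eq_matI) auto
    finally show "det (mat\<^sub>r k k (\<lambda>i. ?a i (\<phi> i))) = prod (\<lambda>i. A $$ (f i, \<phi> i)) {0..<k} * minor B k \<phi> g"
      unfolding minor_def .
  qed
  also have "x dvd \<dots>"
  proof (rule dvd_sum, rule dvd_mult)
    fix \<phi> assume "\<phi> \<in> ?F"
    then have "\<forall>i<k. \<phi> i < dim_row B" using B by auto
    moreover have "\<forall>j<k. g j < dim_col B" using g' B by auto
    ultimately show "x dvd minor B k \<phi> g" using dB unfolding divall_def by blast
  qed
  finally show "x dvd minor (A * B) k f g" .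
qed

lemma minor_transpose:
  assumes f: "\<forall>i<k. f i < dim_col M" and g: "\<forall>j<k. g j < dim_row M"
  shows "minor (transpose_mat M) k f g = minor M k g f"
proof -
  have "minor (transpose_mat M) k f g = det (transpose_mat (mat k k (\<lambda>(i,j). M $$ (g i, f j))))"
    unfolding minor_def by (intro arg_cong[of _ _ det] eq_matI) (use f g in auto)
  also have "\<dots> = minor M k g f" unfolding minor_def by (rule det_transpose) auto
  finally show ?thesis .
qed

lemma divall_transpose: "divall (transpose_mat M) k x \<longleftrightarrow> divall M k x"
proof
  assume "divall (transpose_mat M) k x"
  then show "divall M k x" unfolding divall_def
    by (metis index_transpose_mat(2,3) minor_transpose transpose_transpose)
next
  assume d: "divall M k x"
  show "divall (transpose_mat M) k x" unfolding divall_def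
  proof (intro allI impI)
    fix f g assume f: "\<forall>i<k. f i < dim_row (transpose_mat M)" and g: "\<forall>j<k. g j < dim_col (transpose_mat M)"
    then have "minor (transpose_mat M) k f g = minor M k g f" by (intro minor_transpose) auto
    then show "x dvd minor (transpose_mat M) k f g" using d f g unfolding divall_def by auto
  qed
qed

lemma minor_mult_right:
  fixes A B :: "'a::comm_ring_1 mat"
  assumes A: "A \<in> carrier_mat nr n" and B: "B \<in> carrier_mat n nc" and dA: "divall A k x"
  shows "divall (A * B) k x"
proof -
  have "divall (transpose_mat B * transpose_mat A) k x"
    by (rule minor_mult_left[of _ nc n _ nr]) (use A B dA divall_transpose in auto)
  then show ?thesis using transpose_mult[OF A B] divall_transpose by metis
qed

lemma chain_dvd:
  fixes d :: "nat \<Rightarrow> 'a::comm_monoid_mult"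
  assumes ch: "\<forall>i. i + 1 < q \<longrightarrow> d i dvd d (i + 1)" and ij: "i \<le> j" and jq: "j < q"
  shows "d i dvd d j"
  using ij jq
proof (induction j)
  case 0 then show ?case by simp
next
  case (Suc j)
  show ?case
  proof (cases "i = Suc j")
    case True then show ?thesis by simp
  next
    case False
    then have "d i dvd d j" using Suc by simp
    also have "d j dvd d (Suc j)" using ch Suc.prems by simp
    finally show ?thesis .
  qed
qed

lemma prod_set_dvd:
  fixes d :: "nat \<Rightarrow> 'a::comm_monoid_mult"
  assumes ch: "\<forall>i. i + 1 < q \<longrightarrow> d i dvd d (i + 1)"
  shows "finite F \<Longrightarrow> F \<subseteq> {..<q} \<Longrightarrow> (\<Prod>i<card F. d i) dvd (\<Prod>v\<in>F. d v)"
proof (induction "card F" arbitrary: F)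
  case 0 then show ?case by simp
next
  case (Suc m F)
  then have ne: "F \<noteq> {}" by auto
  define M where "M = Max F"
  have MF: "M \<in> F" unfolding M_def using Suc ne by simp
  have FM: "F \<subseteq> {..M}" unfolding M_def using Suc by auto
  have "card F \<le> card {..M}" using card_mono[OF _ FM] by simp
  then have mM: "m \<le> M" using Suc by simp
  have Mq: "M < q" using MF Suc by auto
  have c: "card (F - {M}) = m" using Suc MF by simp
  have sub: "F - {M} \<subseteq> {..<q}" using Suc.prems(2) by auto
  have IH: "(\<Prod>i<m. d i) dvd (\<Prod>v\<in>F - {M}. d v)"
    using Suc.hyps(1)[of "F - {M}", OF c[symmetric] _ sub] Suc.prems(1) c by auto
  have "(\<Prod>i<card F. d i) = (\<Prod>i<m. d i) * d m" using Suc.hyps(2)[symmetric] by simp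
  also have "\<dots> dvd (\<Prod>v\<in>F - {M}. d v) * d M"
    using IH chain_dvd[OF ch mM Mq] by (rule mult_dvd_mono)
  also have "\<dots> = (\<Prod>v\<in>F. d v)" using prod.remove[OF Suc.prems(1) MF, of d] by (simp add: mult.commute)
  finally show ?case .
qed

definition dmat :: "nat \<Rightarrow> nat \<Rightarrow> (nat \<Rightarrow> 'a::zero) \<Rightarrow> 'a mat" where
  "dmat p q d = mat p q (\<lambda>(i, j). if i = j then d i else 0)"

lemma divall_dmat:
  fixes d :: "nat \<Rightarrow> 'a::comm_ring_1"
  assumes ch: "\<forall>i. i + 1 < q \<longrightarrow> d i dvd d (i + 1)" and kp: "k \<le> p" and kq: "k \<le> q"
  shows "divall (dmat p q d) k x \<longleftrightarrow> x dvd (\<Prod>i<k. d i)"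
proof
  assume A: "divall (dmat p q d) k x"
  have "minor (dmat p q d) k id id = (\<Prod>i<k. d i)"
  proof -
    have "minor (dmat p q d) k id id = det (mat k k (\<lambda>(i, j). if i = j then d i else 0))"
      unfolding minor_def dmat_def by (intro arg_cong[of _ _ det] eq_matI) (use kp kq in auto)
    also have "\<dots> = prod_list (diag_mat (mat k k (\<lambda>(i, j). if i = j then d i else 0)))"
      by (rule det_upper_triangular) (auto simp: upper_triangular_def)
    also have "\<dots> = (\<Prod>i<k. d i)"
    proof -
      have "diag_mat (mat k k (\<lambda>(i, j). if i = j then d i else 0)) = map d [0..<k]"
        unfolding diag_mat_def by (intro map_cong) auto
      then show ?thesis using prod.distinct_set_conv_list[of "[0..<k]" d]
        by (simp add: atLeast0LessThan)
    qed
    finally show ?thesis .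
  qed
  moreover have "\<forall>i<k. id i < dim_row (dmat p q d)" "\<forall>j<k. id j < dim_col (dmat p q d)"
    using kp kq unfolding dmat_def by auto
  ultimately show "x dvd (\<Prod>i<k. d i)" using A unfolding divall_def by metis
next
  assume xd: "x dvd (\<Prod>i<k. d i)"
  show "divall (dmat p q d) k x" unfolding divall_def
  proof (intro allI impI)
    fix f g assume f: "\<forall>i<k. f i < dim_row (dmat p q d)" and g: "\<forall>j<k. g j < dim_col (dmat p q d)"
    have fp: "\<forall>i<k. f i < p" and gq: "\<forall>j<k. g j < q" using f g unfolding dmat_def by auto
    let ?A = "mat k k (\<lambda>(i,j). dmat p q d $$ (f i, g j))"
    have Aij: "\<And>i j. i < k \<Longrightarrow> j < k \<Longrightarrow> ?A $$ (i,j) = (if f i = g j then d (f i) else 0)"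
      using fp gq unfolding dmat_def by auto
    show "x dvd minor (dmat p q d) k f g"
    proof (cases "inj_on f {..<k}")
      case False
      then obtain i1 i2 where i: "i1 < k" "i2 < k" "i1 \<noteq> i2" "f i1 = f i2"
        unfolding inj_on_def by auto
      have "det ?A = 0"
      proof (rule det_identical_rows[of _ k i1 i2])
        show "row ?A i1 = row ?A i2" using i Aij by (intro eq_vecI) auto
      qed (use i in auto)
      then show ?thesis unfolding minor_def by simp
    next
      case True
      have fin: "finite (f ` {..<k})" by simp
      have sub: "f ` {..<k} \<subseteq> {..<q}" if "\<forall>i<k. f i = g (\<pi> i)" and "\<pi> permutes {0..<k}" for \<pi>
      proof
        fix v assume "v \<in> f ` {..<k}"
        then obtain i where "i < k" "v = f i" by auto
        moreover have "\<pi> i < k" using that(2) \<open>i < k\<close> permutes_in_image by fastforce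
        ultimately show "v \<in> {..<q}" using that gq by auto
      qed
      have cardf: "card (f ` {..<k}) = k" using card_image[OF True] by simp
      have tm: "x dvd (\<Prod>i = 0..<k. ?A $$ (i, \<pi> i))" if \<pi>: "\<pi> permutes {0..<k}" for \<pi>
      proof (cases "\<forall>i<k. f i = g (\<pi> i)")
        case True
        have pk: "\<And>i. i < k \<Longrightarrow> \<pi> i < k" using \<pi> permutes_in_image by fastforce
        have "(\<Prod>i = 0..<k. ?A $$ (i, \<pi> i)) = (\<Prod>i = 0..<k. d (f i))"
          by (rule prod.cong) (use True Aij pk in auto)
        also have "\<dots> = (\<Prod>v\<in>f ` {..<k}. d v)"
          using prod.reindex[OF \<open>inj_on f {..<k}\<close>, of d] by (simp add: atLeast0LessThan)
        finally have eq: "(\<Prod>i = 0..<k. ?A $$ (i, \<pi> i)) = (\<Prod>v\<in>f ` {..<k}. d v)" .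
        have "(\<Prod>i<k. d i) dvd (\<Prod>v\<in>f ` {..<k}. d v)"
          using prod_set_dvd[OF ch fin sub[OF True \<pi>]] cardf by simp
        then show ?thesis using xd eq dvd_trans by metis
      next
        case False
        then obtain i where i: "i < k" "f i \<noteq> g (\<pi> i)" by auto
        have pk: "\<pi> i < k" using \<pi> permutes_in_image i by fastforce
        have z: "?A $$ (i, \<pi> i) = 0" using Aij[OF i(1) pk] i(2) by simp
        have "(\<Prod>i = 0..<k. ?A $$ (i, \<pi> i)) = 0"
          by (rule prod_zero) (simp, rule bexI[of _ i], rule z, use i(1) in simp)
        then show ?thesis by simp
      qed
      have "minor (dmat p q d) k f g = (\<Sum>\<pi>\<in>{\<pi>. \<pi> permutes {0..<k}}. signof \<pi> * (\<Prod>i = 0..<k. ?A $$ (i, \<pi> i)))"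
        unfolding minor_def by (rule det_def') auto
      also have "x dvd \<dots>" using tm by (intro dvd_sum dvd_mult) auto
      finally show ?thesis .
    qed
  qed
qed

lemma snf_divall:
  fixes M :: "'a::comm_ring_1 mat"
  assumes snf: "is_snf_entries M d" and kc: "k \<le> dim_col M" and kr: "k \<le> dim_row M"
  shows "divall M k x \<longleftrightarrow> x dvd (\<Prod>i<k. d i)"
proof -
  let ?r = "dim_row M" and ?c = "dim_col M"
  obtain P Q where P: "P \<in> carrier_mat ?r ?r" and Q: "Q \<in> carrier_mat ?c ?c"
    and iP: "invertible_mat P" and iQ: "invertible_mat Q"
    and eq': "P * M * Q = mat ?r ?c (\<lambda>(i, j). if i = j then d i else 0)" and ch: "\<forall>i. i + 1 < ?c \<longrightarrow> d i dvd d (i + 1)"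
    using snf unfolding is_snf_entries_def by (elim exE conjE) (rule that, assumption+)
  have eq: "P * M * Q = dmat ?r ?c d" using eq' unfolding dmat_def .
  have Mc: "M \<in> carrier_mat ?r ?c" by auto
  have "\<exists>B. inverts_mat P B \<and> inverts_mat B P" using iP unfolding invertible_mat_def by (rule conjunct2)
  then obtain B where "inverts_mat P B" "inverts_mat B P" by (elim exE conjE)
  then have B1': "P * B = 1\<^sub>m (dim_row P)" and B2: "B * P = 1\<^sub>m (dim_row B)"
    unfolding inverts_mat_def by simp_all
  have B1: "P * B = 1\<^sub>m ?r" using B1' P by simp
  have B: "B \<in> carrier_mat ?r ?r"
  proof -
    have "dim_col B = ?r" using arg_cong[OF B1, of dim_col] by simp
    moreover have "dim_row B = ?r" using arg_cong[OF B2, of dim_col] P by simp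
    ultimately show ?thesis by auto
  qed
  have "\<exists>C. inverts_mat Q C \<and> inverts_mat C Q" using iQ unfolding invertible_mat_def by (rule conjunct2)
  then obtain C where "inverts_mat Q C" "inverts_mat C Q" by (elim exE conjE)
  then have C1': "Q * C = 1\<^sub>m (dim_row Q)" and C2: "C * Q = 1\<^sub>m (dim_row C)"
    unfolding inverts_mat_def by simp_all
  have C1: "Q * C = 1\<^sub>m ?c" using C1' Q by simp
  have C: "C \<in> carrier_mat ?c ?c"
  proof -
    have "dim_col C = ?c" using arg_cong[OF C1, of dim_col] by simp
    moreover have "dim_row C = ?c" using arg_cong[OF C2, of dim_col] Q by simp
    ultimately show ?thesis by auto
  qed
  have PM: "P * M \<in> carrier_mat ?r ?c" by (rule mult_carrier_mat[OF P Mc])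
  have PMQ: "P * M * Q \<in> carrier_mat ?r ?c" by (rule mult_carrier_mat[OF PM Q])
  have BPMQ: "B * (P * M * Q) \<in> carrier_mat ?r ?c" by (rule mult_carrier_mat[OF B PMQ])
  have bk: "B * (P * M * Q) * C = M"
  proof -
    have e1: "B * (P * M * Q) = B * (P * M) * Q"
      by (rule assoc_mult_mat[symmetric, OF B PM Q])
    have e2: "B * (P * M) = B * P * M" by (rule assoc_mult_mat[symmetric, OF B P Mc])
    have BP: "B * P = 1\<^sub>m ?r" using B2 carrier_matD(1)[OF B] by metis
    have e3: "B * P * M = M" unfolding BP by (rule left_mult_one_mat[OF Mc])
    have e4: "M * Q * C = M * (Q * C)" by (rule assoc_mult_mat[OF Mc Q C])
    have e5: "M * (Q * C) = M" unfolding C1 by (rule right_mult_one_mat[OF Mc])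
    show ?thesis unfolding e1 e2 e3 e4 e5 ..
  qed
  have dm: "divall (dmat ?r ?c d) k x \<longleftrightarrow> x dvd (\<Prod>i<k. d i)"
    by (rule divall_dmat[OF ch kr kc])
  show ?thesis
  proof
    assume "divall M k x"
    then have "divall (P * M) k x" by (rule minor_mult_left[OF P Mc])
    then have "divall (P * M * Q) k x" by (rule minor_mult_right[OF PM Q])
    then have "divall (dmat ?r ?c d) k x" unfolding eq .
    then show "x dvd (\<Prod>i<k. d i)" using dm by blast
  next
    assume "x dvd (\<Prod>i<k. d i)"
    then have "divall (dmat ?r ?c d) k x" using dm by blast
    then have "divall (P * M * Q) k x" unfolding eq .
    then have "divall (B * (P * M * Q)) k x" by (rule minor_mult_left[OF B PMQ])
    then have "divall (B * (P * M * Q) * C) k x" by (rule minor_mult_right[OF BPMQ C])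
    then show "divall M k x" unfolding bk .
  qed
qed

lemma final_alg:
  fixes a a' u u' :: "'a::idom"
  assumes "a dvd a'" "a' dvd a" "a * u dvd a' * u'" "a' * u' dvd a * u"
    and "a = 0 \<Longrightarrow> u = 0" and "a' = 0 \<Longrightarrow> u' = 0"
  shows "u dvd u' \<and> u' dvd u"
proof (cases "a = 0")
  case True
  then have "a' = 0" using assms(1) by simp
  then show ?thesis using True assms by simp
next
  case False
  then have a'0: "a' \<noteq> 0" using assms(2) by auto
  obtain v where v: "a' = a * v" using assms(1) by (auto elim: dvdE)
  obtain w where w: "a = a' * w" using assms(2) by (auto elim: dvdE)
  have "a * (v * w) = a * 1"
    by (simp only: mult.assoc[symmetric] v[symmetric] w[symmetric] mult_1_right)
  then have "a = 0 \<or> v * w = 1" by (simp only: mult_cancel_left)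
  then have vw: "v * w = 1" using False by simp
  have "a * u dvd a * (v * u')" using assms(3) v by (simp add: mult.assoc)
  then have "u dvd v * u'" using False by simp
  also have "v * u' dvd u'"
  proof (rule dvdI)
    show "u' = v * u' * w" using vw by (simp add: algebra_simps)
  qed
  finally have 1: "u dvd u'" .
  have "a' * u' dvd a' * (w * u)" using assms(4) w by (simp add: mult.assoc)
  then have "u' dvd w * u" using a'0 by simp
  also have "w * u dvd u"
  proof (rule dvdI)
    show "u = w * u * v" using vw by (simp add: algebra_simps)
  qed
  finally have 2: "u' dvd u" .
  show ?thesis using 1 2 by simp
qed

lemma prod_zero_chain:
  fixes d :: "nat \<Rightarrow> 'a::idom"
  assumes ch: "\<forall>i. i + 1 < q \<longrightarrow> d i dvd d (i + 1)" and z: "(\<Prod>i<m. d i) = 0" and mq: "m < q"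
  shows "d m = 0"
proof -
  obtain i where i: "i < m" "d i = 0" using z by (auto simp: prod_zero_iff)
  have "d i dvd d m" by (rule chain_dvd[OF ch]) (use i mq in auto)
  then show ?thesis using i by simp
qed

lemma snf_toep:
  fixes h :: "nat \<Rightarrow> 'a::comm_ring_1"
  assumes snf: "is_snf_entries (sub_toeplitz n h c) d" and j: "1 \<le> j" "j \<le> c" and cn: "2 * c \<le> n"
  shows "x dvd (\<Prod>i<j. d i) \<longleftrightarrow> divall (sub_toeplitz n h j) j x"
proof -
  have "x dvd (\<Prod>i<j. d i) \<longleftrightarrow> divall (sub_toeplitz n h c) j x"
    by (rule snf_divall[OF snf, symmetric]) (use j cn in auto)
  also have "\<dots> \<longleftrightarrow> divall (sub_toeplitz n h j) j x" by (rule toep_div[OF j cn])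
  finally show ?thesis .
qed

theorem lemma2:
  fixes n k :: nat and h :: "nat \<Rightarrow> 'a::pid"
  assumes "n \<ge> 1" and "1 \<le> k" and "2 * k \<le> n"
  shows "\<forall>c c' d d'. k \<le> c \<and> 2 * c \<le> n \<and> k \<le> c' \<and> 2 * c' \<le> n \<and>
           is_snf_entries (sub_toeplitz n h c) d \<and> is_snf_entries (sub_toeplitz n h c') d' \<longrightarrow>
           d (k - 1) dvd d' (k - 1) \<and> d' (k - 1) dvd d (k - 1)"
proof (intro allI impI)
  fix c c' d d'
  assume H: "k \<le> c \<and> 2 * c \<le> n \<and> k \<le> c' \<and> 2 * c' \<le> n \<and>
           is_snf_entries (sub_toeplitz n h c) d \<and> is_snf_entries (sub_toeplitz n h c') d'"
  then have kc: "k \<le> c" and cn: "2 * c \<le> n" and kc': "k \<le> c'" and cn': "2 * c' \<le> n"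
    and s: "is_snf_entries (sub_toeplitz n h c) d" and s': "is_snf_entries (sub_toeplitz n h c') d'"
    by auto
  have same: "(\<Prod>i<j. d i) dvd (\<Prod>i<j. d' i) \<and> (\<Prod>i<j. d' i) dvd (\<Prod>i<j. d i)" if j: "j \<le> k" for j
  proof (cases "j = 0")
    case True then show ?thesis by simp
  next
    case False
    then have j1: "1 \<le> j" by simp
    have jc: "j \<le> c" "j \<le> c'" using j kc kc' by auto
    have "\<And>x. x dvd (\<Prod>i<j. d i) \<longleftrightarrow> x dvd (\<Prod>i<j. d' i)"
    proof -
      fix x
      have e1: "x dvd (\<Prod>i<j. d i) \<longleftrightarrow> divall (sub_toeplitz n h j) j x" by (rule snf_toep[OF s j1 jc(1) cn])
      have e2: "x dvd (\<Prod>i<j. d' i) \<longleftrightarrow> divall (sub_toeplitz n h j) j x" by (rule snf_toep[OF s' j1 jc(2) cn'])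
      show "x dvd (\<Prod>i<j. d i) \<longleftrightarrow> x dvd (\<Prod>i<j. d' i)" unfolding e1 e2 ..
    qed
    then show ?thesis by (meson dvd_refl)
  qed
  have ch: "\<forall>i. i + 1 < c \<longrightarrow> d i dvd d (i + 1)" using s unfolding is_snf_entries_def by auto
  have ch': "\<forall>i. i + 1 < c' \<longrightarrow> d' i dvd d' (i + 1)" using s' unfolding is_snf_entries_def by auto
  have kk: "k = Suc (k - 1)" using assms by simp
  have pk: "(\<Prod>i<k. d i) = (\<Prod>i<k - 1. d i) * d (k - 1)" "(\<Prod>i<k. d' i) = (\<Prod>i<k - 1. d' i) * d' (k - 1)"
    by (subst kk, simp)+
  show "d (k - 1) dvd d' (k - 1) \<and> d' (k - 1) dvd d (k - 1)"
  proof (rule final_alg)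
    show "(\<Prod>i<k - 1. d i) dvd (\<Prod>i<k - 1. d' i)" "(\<Prod>i<k - 1. d' i) dvd (\<Prod>i<k - 1. d i)"
      using same[of "k - 1"] by auto
    show "(\<Prod>i<k - 1. d i) * d (k - 1) dvd (\<Prod>i<k - 1. d' i) * d' (k - 1)"
      "(\<Prod>i<k - 1. d' i) * d' (k - 1) dvd (\<Prod>i<k - 1. d i) * d (k - 1)"
      using same[of k] pk by auto
    show "(\<Prod>i<k - 1. d i) = 0 \<Longrightarrow> d (k - 1) = 0"
      by (rule prod_zero_chain[OF ch]) (use kc assms in auto)
    show "(\<Prod>i<k - 1. d' i) = 0 \<Longrightarrow> d' (k - 1) = 0"
      by (rule prod_zero_chain[OF ch']) (use kc' assms in auto)
  qed
qed

end
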